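(* Let $A$ be an algebra with non-degenerate product, $\Delta$ a regular comultiplication on $A$, and suppose there exists a left integral $\varphi$ on $(A,\Delta)$. Then for any finitely many elements $a_1,\dots,a_n\in A$ there exists $e\in A$ with $a_ie=ea_i=a_i$ for all $i$.
   Context: All algebras are over $\mathbb C$, associative, possibly without identity, with non-degenerate product. $M(A)$ denotes the multiplier algebra and $\iota$ the identity map. A regular comultiplication is a linear map $\Delta:A\to M(A\otimes A)$, not assumed multiplicative, such that: - $\Delta(a)(1\otimes b)$, $(a\otimes1)\Delta(b)$, $\Delta(a)(b\otimes1)$ and $(1\otimes a)\Delta(b)$ all lie in $A\otimes A$; - $(a\otimes1\otimes1)(\Delta\otimes\iota)(\Delta(b)(1\otimes c))=(\iota\otimes\Delta)((a\otimes1)\Delta(b))(1\otimes1\otimes c)$. A left integral is a nonzero linear functional $\varphi$ on $A$ with $(\iota\otimes\varphi)\Delta(a)=\varphi(a)1$ in $M(A)$ for all $a\in A$. Here $(\iota\otimes\varphi)\Delta(a)$ is the multiplier with $((\iota\otimes\varphi)\Delta(a))b=(\iota\otimes\varphi)(\Delta(a)(b\otimes1))$ and $b((\iota\otimes\varphi)\Delta(a))=(\iota\otimes\varphi)((b\otimes1)\Delta(a))$. *)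

theory Defs
  imports Complex_Main
begin

text \<open>
  Elements of the algebraic tensor
  products A (x) A and A (x) A (x) A are represented by finite lists of
  simple tensors; two such lists represent the same tensor iff they are
  identified by all products of linear functionals (teq, teq3).
  A multiplier of A (x) A is a pair (L, R) of maps (left and right action).
\<close>

type_synonym 'a tens = "('a \<times> 'a) list"
type_synonym 'a tens3 = "('a \<times> 'a \<times> 'a) list"
type_synonym 'a mult2 = "('a tens \<Rightarrow> 'a tens) \<times> ('a tens \<Rightarrow> 'a tens)"

definition lin_fun :: "(complex \<Rightarrow> 'a::ab_group_add \<Rightarrow> 'a) \<Rightarrow> ('a \<Rightarrow> complex) \<Rightarrow> bool" where
  "lin_fun sc f \<longleftrightarrow> Vector_Spaces.linear sc ((*) :: complex \<Rightarrow> complex \<Rightarrow> complex) f"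

definition nd_algebra :: "(complex \<Rightarrow> 'a::ab_group_add \<Rightarrow> 'a) \<Rightarrow> ('a \<Rightarrow> 'a \<Rightarrow> 'a) \<Rightarrow> bool" where
  "nd_algebra sc mul \<longleftrightarrow>
     vector_space sc \<and>
     (\<forall>x y z. mul (x + y) z = mul x z + mul y z) \<and>
     (\<forall>x y z. mul x (y + z) = mul x y + mul x z) \<and>
     (\<forall>c x y. mul (sc c x) y = sc c (mul x y)) \<and>
     (\<forall>c x y. mul x (sc c y) = sc c (mul x y)) \<and>
     (\<forall>x y z. mul (mul x y) z = mul x (mul y z)) \<and>
     (\<forall>a. (\<forall>b. mul a b = 0) \<longrightarrow> a = 0) \<and>
     (\<forall>a. (\<forall>b. mul b a = 0) \<longrightarrow> a = 0)"

definition teq :: "(complex \<Rightarrow> 'a::ab_group_add \<Rightarrow> 'a) \<Rightarrow> 'a tens \<Rightarrow> 'a tens \<Rightarrow> bool" where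
  "teq sc s t \<longleftrightarrow> (\<forall>f g. lin_fun sc f \<and> lin_fun sc g \<longrightarrow>
      sum_list (map (\<lambda>(x, y). f x * g y) s) = sum_list (map (\<lambda>(x, y). f x * g y) t))"

definition teq3 :: "(complex \<Rightarrow> 'a::ab_group_add \<Rightarrow> 'a) \<Rightarrow> 'a tens3 \<Rightarrow> 'a tens3 \<Rightarrow> bool" where
  "teq3 sc s t \<longleftrightarrow> (\<forall>f g h. lin_fun sc f \<and> lin_fun sc g \<and> lin_fun sc h \<longrightarrow>
      sum_list (map (\<lambda>(x, y, z). f x * g y * h z) s) = sum_list (map (\<lambda>(x, y, z). f x * g y * h z) t))"

definition tadd :: "'a tens \<Rightarrow> 'a tens \<Rightarrow> 'a tens" where
  "tadd s t = s @ t"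

definition tscale :: "(complex \<Rightarrow> 'a \<Rightarrow> 'a) \<Rightarrow> complex \<Rightarrow> 'a tens \<Rightarrow> 'a tens" where
  "tscale sc c s = map (\<lambda>(x, y). (sc c x, y)) s"

definition tmul :: "('a \<Rightarrow> 'a \<Rightarrow> 'a) \<Rightarrow> 'a tens \<Rightarrow> 'a tens \<Rightarrow> 'a tens" where
  "tmul mul s t = concat (map (\<lambda>(x, y). map (\<lambda>(x', y'). (mul x x', mul y y')) t) s)"

definition is_mult2 :: "(complex \<Rightarrow> 'a::ab_group_add \<Rightarrow> 'a) \<Rightarrow> ('a \<Rightarrow> 'a \<Rightarrow> 'a) \<Rightarrow> 'a mult2 \<Rightarrow> bool" where
  "is_mult2 sc mul m \<longleftrightarrow>
     (\<forall>s t. teq sc s t \<longrightarrow> teq sc (fst m s) (fst m t) \<and> teq sc (snd m s) (snd m t)) \<and>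
     (\<forall>s t. teq sc (fst m (tadd s t)) (tadd (fst m s) (fst m t)) \<and>
            teq sc (snd m (tadd s t)) (tadd (snd m s) (snd m t))) \<and>
     (\<forall>c s. teq sc (fst m (tscale sc c s)) (tscale sc c (fst m s)) \<and>
            teq sc (snd m (tscale sc c s)) (tscale sc c (snd m s))) \<and>
     (\<forall>s t. teq sc (fst m (tmul mul s t)) (tmul mul (fst m s) t)) \<and>
     (\<forall>s t. teq sc (snd m (tmul mul s t)) (tmul mul s (snd m t))) \<and>
     (\<forall>s t. teq sc (tmul mul s (fst m t)) (tmul mul (snd m s) t))"

definition meq :: "(complex \<Rightarrow> 'a::ab_group_add \<Rightarrow> 'a) \<Rightarrow> 'a mult2 \<Rightarrow> 'a mult2 \<Rightarrow> bool" where
  "meq sc m m' \<longleftrightarrow> (\<forall>s. teq sc (fst m s) (fst m' s) \<and> teq sc (snd m s) (snd m' s))"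

definition madd :: "'a mult2 \<Rightarrow> 'a mult2 \<Rightarrow> 'a mult2" where
  "madd m m' = (\<lambda>s. tadd (fst m s) (fst m' s), \<lambda>s. tadd (snd m s) (snd m' s))"

definition mscale :: "(complex \<Rightarrow> 'a \<Rightarrow> 'a) \<Rightarrow> complex \<Rightarrow> 'a mult2 \<Rightarrow> 'a mult2" where
  "mscale sc c m = (\<lambda>s. tscale sc c (fst m s), \<lambda>s. tscale sc c (snd m s))"

definition mmul :: "'a mult2 \<Rightarrow> 'a mult2 \<Rightarrow> 'a mult2" where
  "mmul m1 m2 = (fst m1 \<circ> fst m2, snd m2 \<circ> snd m1)"

definition tens_one :: "('a \<Rightarrow> 'a \<Rightarrow> 'a) \<Rightarrow> 'a \<Rightarrow> 'a mult2" where
  "tens_one mul a = (map (\<lambda>(x, y). (mul a x, y)), map (\<lambda>(x, y). (mul x a, y)))"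

definition one_tens :: "('a \<Rightarrow> 'a \<Rightarrow> 'a) \<Rightarrow> 'a \<Rightarrow> 'a mult2" where
  "one_tens mul a = (map (\<lambda>(x, y). (x, mul a y)), map (\<lambda>(x, y). (x, mul y a)))"

text \<open>t in A (x) A represents the multiplier m (i.e. m = t in M(A (x) A));
  m lies in A (x) A iff it is represented by some t.\<close>
definition represents :: "(complex \<Rightarrow> 'a::ab_group_add \<Rightarrow> 'a) \<Rightarrow> ('a \<Rightarrow> 'a \<Rightarrow> 'a) \<Rightarrow> 'a tens \<Rightarrow> 'a mult2 \<Rightarrow> bool" where
  "represents sc mul t m \<longleftrightarrow> (\<forall>s. teq sc (fst m s) (tmul mul t s) \<and> teq sc (snd m s) (tmul mul s t))"

definition in_tens :: "(complex \<Rightarrow> 'a::ab_group_add \<Rightarrow> 'a) \<Rightarrow> ('a \<Rightarrow> 'a \<Rightarrow> 'a) \<Rightarrow> 'a mult2 \<Rightarrow> bool" where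
  "in_tens sc mul m \<longleftrightarrow> (\<exists>t. represents sc mul t m)"

definition rep :: "(complex \<Rightarrow> 'a::ab_group_add \<Rightarrow> 'a) \<Rightarrow> ('a \<Rightarrow> 'a \<Rightarrow> 'a) \<Rightarrow> 'a mult2 \<Rightarrow> 'a tens" where
  "rep sc mul m = (SOME t. represents sc mul t m)"

text \<open>The coassociativity equation
  (a(x)1(x)1)(Delta(x)id)(Delta(b)(1(x)c)) = (id(x)Delta)((a(x)1)Delta(b))(1(x)1(x)c)
  is written out in A (x) A (x) A: if Delta(b)(1(x)c) = sum x_i (x) y_i then the left side
  is sum ((a(x)1)Delta(x_i)) (x) y_i, and if (a(x)1)Delta(b) = sum u_j (x) v_j then the right
  side is sum u_j (x) (Delta(v_j)(1(x)c)).\<close>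
definition regular_comult :: "(complex \<Rightarrow> 'a::ab_group_add \<Rightarrow> 'a) \<Rightarrow> ('a \<Rightarrow> 'a \<Rightarrow> 'a) \<Rightarrow> ('a \<Rightarrow> 'a mult2) \<Rightarrow> bool" where
  "regular_comult sc mul \<Delta> \<longleftrightarrow>
     (\<forall>a. is_mult2 sc mul (\<Delta> a)) \<and>
     (\<forall>a b. meq sc (\<Delta> (a + b)) (madd (\<Delta> a) (\<Delta> b))) \<and>
     (\<forall>c a. meq sc (\<Delta> (sc c a)) (mscale sc c (\<Delta> a))) \<and>
     (\<forall>a b. in_tens sc mul (mmul (\<Delta> a) (one_tens mul b))) \<and>
     (\<forall>a b. in_tens sc mul (mmul (tens_one mul a) (\<Delta> b))) \<and>
     (\<forall>a b. in_tens sc mul (mmul (\<Delta> a) (tens_one mul b))) \<and>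
     (\<forall>a b. in_tens sc mul (mmul (one_tens mul a) (\<Delta> b))) \<and>
     (\<forall>a b c. teq3 sc
        (concat (map (\<lambda>(x, y). map (\<lambda>(p, q). (p, q, y)) (rep sc mul (mmul (tens_one mul a) (\<Delta> x))))
                 (rep sc mul (mmul (\<Delta> b) (one_tens mul c)))))
        (concat (map (\<lambda>(u, v). map (\<lambda>(r, w). (u, r, w)) (rep sc mul (mmul (\<Delta> v) (one_tens mul c))))
                 (rep sc mul (mmul (tens_one mul a) (\<Delta> b))))))"

definition slice2 :: "(complex \<Rightarrow> 'a::ab_group_add \<Rightarrow> 'a) \<Rightarrow> ('a \<Rightarrow> complex) \<Rightarrow> 'a tens \<Rightarrow> 'a" where
  "slice2 sc \<phi> t = sum_list (map (\<lambda>(x, y). sc (\<phi> y) x) t)"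

text \<open>Left integral: nonzero linear functional with (id (x) phi)Delta(a) = phi(a) 1 in M(A),
  i.e. (id(x)phi)(Delta(a)(b(x)1)) = phi(a) b and (id(x)phi)((b(x)1)Delta(a)) = phi(a) b.\<close>
definition left_integral :: "(complex \<Rightarrow> 'a::ab_group_add \<Rightarrow> 'a) \<Rightarrow> ('a \<Rightarrow> 'a \<Rightarrow> 'a) \<Rightarrow> ('a \<Rightarrow> 'a mult2) \<Rightarrow> ('a \<Rightarrow> complex) \<Rightarrow> bool" where
  "left_integral sc mul \<Delta> \<phi> \<longleftrightarrow>
     lin_fun sc \<phi> \<and> (\<exists>a. \<phi> a \<noteq> 0) \<and>
     (\<forall>a b. slice2 sc \<phi> (rep sc mul (mmul (\<Delta> a) (tens_one mul b))) = sc (\<phi> a) b) \<and>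
     (\<forall>a b. slice2 sc \<phi> (rep sc mul (mmul (tens_one mul b) (\<Delta> a))) = sc (\<phi> a) b)"

end

theory Submission
  imports Defs "HOL-Library.Function_Algebras"
begin

lemma vs_complex: "vector_space ((*) :: complex \<Rightarrow> complex \<Rightarrow> complex)"
  by unfold_locales (auto simp: algebra_simps)

lemma sep:
  fixes s :: "complex \<Rightarrow> 'b::ab_group_add \<Rightarrow> 'b"
  assumes vs: "vector_space s" and nv: "v \<notin> module.span s S"
  shows "\<exists>f. Vector_Spaces.linear s ((*) :: complex \<Rightarrow> complex \<Rightarrow> complex) f \<and> f v \<noteq> 0 \<and> (\<forall>x\<in>S. f x = 0)"
proof -
  interpret V: vector_space s by fact
  interpret P: vector_space_pair s "(*) :: complex \<Rightarrow> complex \<Rightarrow> complex"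
    using vs vs_complex by (simp add: vector_space_pair_def)
  obtain B where B: "B \<subseteq> S" "V.independent B" "S \<subseteq> V.span B"
    using V.maximal_independent_subset by blast
  have sp: "V.span B = V.span S" using B by (metis V.span_mono V.span_span subset_antisym)
  have vB: "v \<notin> V.span B" using nv sp by simp
  have ind: "V.independent (insert v B)" using V.independent_insertI[OF vB B(2)] .
  have vnB: "v \<notin> B" using vB V.span_base by blast
  obtain g where g: "Vector_Spaces.linear s (*) g" "\<forall>x\<in>insert v B. g x = (if x = v then 1 else 0)"
    using P.linear_independent_extend[OF ind, of "\<lambda>x. if x = v then 1 else 0"] by blast
  have "\<forall>x\<in>S. g x = 0"
  proof
    fix x assume "x \<in> S"
    then have "x \<in> V.span B" using B by blast
    moreover have "\<And>b. b \<in> B \<Longrightarrow> g b = 0" using g(2) vnB by fastforce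
    ultimately show "g x = 0"
      using P.linear_eq_on[OF g(1) P.linear_zero, of x B] by auto
  qed
  then show ?thesis using g by (intro exI[of _ g]) auto
qed

lemma nd_vs: "nd_algebra sc mul \<Longrightarrow> vector_space sc"
  unfolding nd_algebra_def by blast

lemma nd_ldist: "nd_algebra sc mul \<Longrightarrow> mul (x + y) z = mul x z + mul y z"
  unfolding nd_algebra_def by blast
lemma nd_rdist: "nd_algebra sc mul \<Longrightarrow> mul x (y + z) = mul x y + mul x z"
  unfolding nd_algebra_def by blast
lemma nd_lsc: "nd_algebra sc mul \<Longrightarrow> mul (sc c x) y = sc c (mul x y)"
  unfolding nd_algebra_def by blast
lemma nd_rsc: "nd_algebra sc mul \<Longrightarrow> mul x (sc c y) = sc c (mul x y)"
  unfolding nd_algebra_def by blast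
lemma nd_assoc: "nd_algebra sc mul \<Longrightarrow> mul (mul x y) z = mul x (mul y z)"
  unfolding nd_algebra_def by blast
lemma nd_ndr: "nd_algebra sc mul \<Longrightarrow> (\<And>b. mul a b = 0) \<Longrightarrow> a = 0"
  unfolding nd_algebra_def by blast
lemma nd_ndl: "nd_algebra sc mul \<Longrightarrow> (\<And>b. mul b a = 0) \<Longrightarrow> a = 0"
  unfolding nd_algebra_def by blast

lemma nd_opp: assumes a: "nd_algebra sc mul" shows "nd_algebra sc (\<lambda>x y. mul y x)"
  unfolding nd_algebra_def
proof (intro conjI)
  show "vector_space sc" by (rule nd_vs[OF a])
  show "\<forall>x y z. mul z (x + y) = mul z x + mul z y" using nd_rdist[OF a] by blast
  show "\<forall>x y z. mul (y + z) x = mul y x + mul z x" using nd_ldist[OF a] by blast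
  show "\<forall>c x y. mul y (sc c x) = sc c (mul y x)" using nd_rsc[OF a] by blast
  show "\<forall>c x y. mul (sc c y) x = sc c (mul y x)" using nd_lsc[OF a] by blast
  show "\<forall>x y z. mul z (mul y x) = mul (mul z y) x" using nd_assoc[OF a] by metis
  show "\<forall>b. (\<forall>c. mul c b = 0) \<longrightarrow> b = 0" using nd_ndl[OF a] by blast
  show "\<forall>b. (\<forall>c. mul b c = 0) \<longrightarrow> b = 0" using nd_ndr[OF a] by blast
qed

lemma nd_lzero: "nd_algebra sc mul \<Longrightarrow> mul 0 x = 0"
  using nd_ldist[of sc mul 0 0 x] by simp
lemma nd_rzero: "nd_algebra sc mul \<Longrightarrow> mul x 0 = 0"
  using nd_rdist[of sc mul x 0 0] by simp
lemma nd_lminus: "nd_algebra sc mul \<Longrightarrow> mul (x - y) z = mul x z - mul y z"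
  using nd_ldist[of sc mul "x - y" y z] by (simp add: algebra_simps)
lemma nd_rminus: "nd_algebra sc mul \<Longrightarrow> mul z (x - y) = mul z x - mul z y"
  using nd_rdist[of sc mul z "x - y" y] by (simp add: algebra_simps)

lemma lf_add: "lin_fun sc f \<Longrightarrow> f (x + y) = f x + f y"
  unfolding lin_fun_def Vector_Spaces.linear_iff by blast
lemma lf_scale: "lin_fun sc f \<Longrightarrow> f (sc c x) = c * f x"
  unfolding lin_fun_def Vector_Spaces.linear_iff by blast
lemma lf_zero: "lin_fun sc f \<Longrightarrow> f 0 = 0"
  using lf_add[of sc f 0 0] by simp
lemma lf_minus: "lin_fun sc f \<Longrightarrow> f (x - y) = f x - f y"
  using lf_add[of sc f "x - y" y] by (simp add: algebra_simps)

lemma lf_compr: "nd_algebra sc mul \<Longrightarrow> lin_fun sc f \<Longrightarrow> lin_fun sc (\<lambda>x. f (mul x p))"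
  unfolding lin_fun_def Vector_Spaces.linear_iff
  by (simp add: nd_ldist[of sc mul] nd_lsc[of sc mul])
lemma lf_compl: "nd_algebra sc mul \<Longrightarrow> lin_fun sc f \<Longrightarrow> lin_fun sc (\<lambda>x. f (mul p x))"
  unfolding lin_fun_def Vector_Spaces.linear_iff
  by (simp add: nd_rdist[of sc mul] nd_rsc[of sc mul])

lemma K1: assumes "nd_algebra sc mul" "\<And>f. lin_fun sc f \<Longrightarrow> f w = 0" shows "w = 0"
proof (rule ccontr)
  assume "w \<noteq> 0"
  moreover have "module sc" using nd_vs[OF assms(1)] unfolding vector_space_def module_def by blast
  ultimately have "w \<notin> module.span sc {}"
    by (simp add: module.span_empty)
  from sep[OF nd_vs[OF assms(1)] this] obtain f where
     "Vector_Spaces.linear sc ((*) :: complex \<Rightarrow> complex \<Rightarrow> complex) f" "f w \<noteq> 0" by blast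
  moreover from this(1) have "lin_fun sc f" unfolding lin_fun_def .
  ultimately show False using assms(2) by blast
qed


definition Rs :: "(complex \<Rightarrow> 'a::ab_group_add \<Rightarrow> 'a) \<Rightarrow> 'a tens \<Rightarrow> ('a \<Rightarrow> complex) \<Rightarrow> 'a" where
  "Rs sc L k = sum_list (map (\<lambda>(x, y). sc (k y) x) L)"
definition Ls :: "(complex \<Rightarrow> 'a::ab_group_add \<Rightarrow> 'a) \<Rightarrow> 'a tens \<Rightarrow> ('a \<Rightarrow> complex) \<Rightarrow> 'a" where
  "Ls sc L f = sum_list (map (\<lambda>(x, y). sc (f x) y) L)"

lemma Rs_app: "lin_fun sc f \<Longrightarrow> f (Rs sc L k) = sum_list (map (\<lambda>(x, y). f x * k y) L)"
  by (induction L) (auto simp: Rs_def lf_zero lf_add lf_scale mult.commute)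
lemma Ls_app: "lin_fun sc g \<Longrightarrow> g (Ls sc L f) = sum_list (map (\<lambda>(x, y). f x * g y) L)"
  by (induction L) (auto simp: Ls_def lf_zero lf_add lf_scale)
lemma Rs_mul: "nd_algebra sc mul \<Longrightarrow> mul (Rs sc L k) p = Rs sc (map (\<lambda>(x, y). (mul x p, y)) L) k"
  by (induction L) (auto simp: Rs_def nd_lzero nd_ldist nd_lsc)
lemma Ls_mul: "nd_algebra sc mul \<Longrightarrow> mul (Ls sc L f) q = Ls sc (map (\<lambda>(x, y). (x, mul y q)) L) f"
  by (induction L) (auto simp: Ls_def nd_lzero nd_ldist nd_lsc)

lemma tmul_single_r: "tmul mul X [(p, q)] = map (\<lambda>(x, y). (mul x p, mul y q)) X"
  by (induction X) (auto simp: tmul_def)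
lemma tmul_single_l: "tmul mul [(p, q)] X = map (\<lambda>(x, y). (mul p x, mul q y)) X"
  by (simp add: tmul_def case_prod_beta)

lemma teq_sym: "teq sc X Y \<Longrightarrow> teq sc Y X"
  unfolding teq_def by metis
lemma teq_trans: "teq sc X Y \<Longrightarrow> teq sc Y Z \<Longrightarrow> teq sc X Z"
  unfolding teq_def by metis

lemma sl_map: "sum_list (map h (map g L)) = sum_list (map (h \<circ> g) L)"
  by simp

lemma tens_nd_right:
  assumes nd: "nd_algebra sc mul"
    and H: "\<And>p q. teq sc (tmul mul X [(p, q)]) (tmul mul Y [(p, q)])"
  shows "teq sc X Y"
  unfolding teq_def
proof (intro allI impI)
  fix f g assume fg: "lin_fun sc f \<and> lin_fun sc g"
  have step1: "sum_list (map (\<lambda>(x, y). f' x * g' (mul y q)) X) = sum_list (map (\<lambda>(x, y). f' x * g' (mul y q)) Y)"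
    if f': "lin_fun sc f'" and g': "lin_fun sc g'" for f' g' q
  proof -
    let ?k = "\<lambda>y. g' (mul y q)"
    define w where "w = Rs sc X ?k - Rs sc Y ?k"
    have "mul w p = 0" for p
    proof (rule K1[OF nd])
      fix h assume h: "lin_fun sc h"
      have hp: "lin_fun sc (\<lambda>x. h (mul x p))" by (rule lf_compr[OF nd h])
      have "h (mul w p) = h (mul (Rs sc X ?k) p) - h (mul (Rs sc Y ?k) p)"
        unfolding w_def by (simp add: nd_lminus[OF nd] lf_minus[OF h])
      also have "\<dots> = sum_list (map (\<lambda>(x, y). h (mul x p) * g' (mul y q)) X)
                    - sum_list (map (\<lambda>(x, y). h (mul x p) * g' (mul y q)) Y)"
        using Rs_app[OF hp] by simp
      also have "\<dots> = 0"
      proof -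
        have e: "sum_list (map (\<lambda>(x, y). h x * g' y) (tmul mul X [(p, q)])) =
                 sum_list (map (\<lambda>(x, y). h x * g' y) (tmul mul Y [(p, q)]))"
          using H[of p q] h g' unfolding teq_def by blast
        show ?thesis using e by (simp add: tmul_single_r comp_def split_def)
      qed
      finally show "h (mul w p) = 0" .
    qed
    then have "w = 0" by (rule nd_ndr[OF nd])
    then have "f' (Rs sc X ?k) = f' (Rs sc Y ?k)" unfolding w_def by simp
    then show ?thesis using Rs_app[OF f'] by simp
  qed
  define z where "z = Ls sc X f - Ls sc Y f"
  have "mul z q = 0" for q
  proof (rule K1[OF nd])
    fix h assume h: "lin_fun sc h"
    have hq: "lin_fun sc (\<lambda>x. h (mul x q))" by (rule lf_compr[OF nd h])
    have "h (mul z q) = h (mul (Ls sc X f) q) - h (mul (Ls sc Y f) q)"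
      unfolding z_def by (simp add: nd_lminus[OF nd] lf_minus[OF h])
    also have "\<dots> = sum_list (map (\<lambda>(x, y). f x * h (mul y q)) X)
                  - sum_list (map (\<lambda>(x, y). f x * h (mul y q)) Y)"
      using Ls_app[OF hq] by simp
    also have "\<dots> = 0" using step1[of f h q] fg h by simp
    finally show "h (mul z q) = 0" .
  qed
  then have "z = 0" by (rule nd_ndr[OF nd])
  then have "g (Ls sc X f) = g (Ls sc Y f)" unfolding z_def by simp
  then show "sum_list (map (\<lambda>(x, y). f x * g y) X) = sum_list (map (\<lambda>(x, y). f x * g y) Y)"
    using Ls_app fg by metis
qed

lemma tens_nd_left:
  assumes nd: "nd_algebra sc mul"
    and H: "\<And>p q. teq sc (tmul mul [(p, q)] X) (tmul mul [(p, q)] Y)"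
  shows "teq sc X Y"
proof (rule tens_nd_right[OF nd_opp[OF nd]])
  fix p q show "teq sc (tmul (\<lambda>x y. mul y x) X [(p, q)]) (tmul (\<lambda>x y. mul y x) Y [(p, q)])"
    using H[of p q] by (simp add: tmul_single_r tmul_single_l)
qed


lemma sum_sum_list: "(\<Sum>i\<in>I. sum_list (map (h i) L)) = sum_list (map (\<lambda>z. \<Sum>i\<in>I. h i z) L)"
  by (induction L) (auto simp: sum.distrib)

lemma mul_sum_r: "nd_algebra sc mul \<Longrightarrow> mul (\<Sum>i<(n::nat). h i) q = (\<Sum>i<n. mul (h i) q)"
  by (induction n) (auto simp: nd_lzero nd_ldist)

lemma lf_sum: "lin_fun sc g \<Longrightarrow> g (\<Sum>i<(n::nat). h i) = (\<Sum>i<n. g (h i))"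
  by (induction n) (auto simp: lf_zero lf_add)

lemma slice2_Rs: "slice2 sc \<phi> L = Rs sc L \<phi>"
  by (simp add: slice2_def Rs_def)

lemma core:
  fixes n :: nat
  assumes nd: "nd_algebra sc mul" and phi: "lin_fun sc \<phi>" and pb: "\<phi> b \<noteq> 0"
    and H1: "\<And>i. i < n \<Longrightarrow> slice2 sc \<phi> (t i) = sc (\<phi> b) (a i)"
    and H2: "\<And>i q. i < n \<Longrightarrow> teq sc (map (\<lambda>(u, v). (u, mul v q)) (t i)) (map (\<lambda>(x, y). (mul (a i) x, y)) (T q))"
    and H3: "\<And>i. i < n \<Longrightarrow> lin_fun sc (\<omega> i)"
    and H4: "\<And>e. (\<Sum>i<n. \<omega> i (mul (a i) e)) = 0"
  shows "(\<Sum>i<n. \<omega> i (a i)) = 0"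
proof -
  define y where "y = (\<Sum>i<n. Ls sc (t i) (\<omega> i))"
  have "mul y q = 0" for q
  proof (rule K1[OF nd])
    fix g assume g: "lin_fun sc g"
    have "g (mul y q) = (\<Sum>i<n. g (Ls sc (map (\<lambda>(u, v). (u, mul v q)) (t i)) (\<omega> i)))"
      unfolding y_def by (simp add: mul_sum_r[OF nd] lf_sum[OF g] Ls_mul[OF nd])
    also have "\<dots> = (\<Sum>i<n. sum_list (map (\<lambda>(x, y). \<omega> i x * g y) (map (\<lambda>(u, v). (u, mul v q)) (t i))))"
      by (simp add: Ls_app[OF g])
    also have "\<dots> = (\<Sum>i<n. sum_list (map (\<lambda>(x, y). \<omega> i x * g y) (map (\<lambda>(x, y). (mul (a i) x, y)) (T q))))"
    proof (rule sum.cong[OF refl])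
      fix i assume "i \<in> {..<n}"
      then have "i < n" by simp
      then show "sum_list (map (\<lambda>(x, y). \<omega> i x * g y) (map (\<lambda>(u, v). (u, mul v q)) (t i))) =
          sum_list (map (\<lambda>(x, y). \<omega> i x * g y) (map (\<lambda>(x, y). (mul (a i) x, y)) (T q)))"
        using H2[of i q] H3[of i] g unfolding teq_def by blast
    qed
    also have "\<dots> = (\<Sum>i<n. sum_list (map (\<lambda>(x, y). \<omega> i (mul (a i) x) * g y) (T q)))"
      by (simp add: comp_def split_def)
    also have "\<dots> = sum_list (map (\<lambda>z. \<Sum>i<n. (case z of (x, y) \<Rightarrow> \<omega> i (mul (a i) x) * g y)) (T q))"
      by (rule sum_sum_list)
    also have "\<dots> = sum_list (map (\<lambda>z. (case z of (x, y) \<Rightarrow> (\<Sum>i<n. \<omega> i (mul (a i) x)) * g y)) (T q))"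
      by (simp add: split_def sum_distrib_right)
    also have "\<dots> = 0" by (simp add: H4 split_def)
    finally show "g (mul y q) = 0" .
  qed
  then have y0: "y = 0" by (rule nd_ndr[OF nd])
  have "0 = \<phi> y" using y0 lf_zero[OF phi] by simp
  also have "\<dots> = (\<Sum>i<n. sum_list (map (\<lambda>(x, y). \<omega> i x * \<phi> y) (t i)))"
    unfolding y_def by (simp add: lf_sum[OF phi] Ls_app[OF phi])
  also have "\<dots> = (\<Sum>i<n. \<phi> b * \<omega> i (a i))"
  proof (rule sum.cong[OF refl])
    fix i assume "i \<in> {..<n}"
    then have i: "i < n" by simp
    have "sum_list (map (\<lambda>(x, y). \<omega> i x * \<phi> y) (t i)) = \<omega> i (slice2 sc \<phi> (t i))"
      by (simp add: slice2_Rs Rs_app[OF H3[OF i]])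
    also have "\<dots> = \<phi> b * \<omega> i (a i)" by (simp add: H1[OF i] lf_scale[OF H3[OF i]])
    finally show "sum_list (map (\<lambda>(x, y). \<omega> i x * \<phi> y) (t i)) = \<phi> b * \<omega> i (a i)" .
  qed
  also have "\<dots> = \<phi> b * (\<Sum>i<n. \<omega> i (a i))" by (simp add: sum_distrib_left)
  finally show ?thesis using pb by simp
qed


lemma tuple_unit:
  fixes n :: nat and a :: "nat \<Rightarrow> 'a::ab_group_add" and sc :: "complex \<Rightarrow> 'a \<Rightarrow> 'a"
  assumes nd: "nd_algebra sc mul"
    and H: "\<And>\<omega>. (\<And>i. i < n \<Longrightarrow> lin_fun sc (\<omega> i)) \<Longrightarrow> (\<And>e. (\<Sum>i<n. \<omega> i (mul (a i) e)) = 0) \<Longrightarrow> (\<Sum>i<n. \<omega> i (a i)) = 0"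
  shows "\<exists>e. \<forall>i<n. mul (a i) e = a i"
proof (rule ccontr)
  assume ne: "\<not> (\<exists>e. \<forall>i<n. mul (a i) e = a i)"
  define scf :: "complex \<Rightarrow> (nat \<Rightarrow> 'a) \<Rightarrow> (nat \<Rightarrow> 'a)" where "scf c f = (\<lambda>i. sc c (f i))" for c f
  have vs: "vector_space sc" by (rule nd_vs[OF nd])
  then have ax: "\<And>c x y. sc c (x + y) = sc c x + sc c y" "\<And>c d x. sc (c + d) x = sc c x + sc d x"
     "\<And>c d x. sc c (sc d x) = sc (c * d) x" "\<And>x. sc 1 x = x"
    unfolding vector_space_def module_def by blast+
  have sc0: "\<And>c. sc c 0 = 0"
    using ax(1)[of _ 0 0] by simp
  have vsf: "vector_space scf"
    unfolding vector_space_def module_def scf_def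
    by (simp add: fun_eq_iff ax)
  interpret F: vector_space scf by (rule vsf)
  define Fn where "Fn e = (\<lambda>i. if i < n then mul (a i) e else 0)" for e
  define S where "S = range Fn"
  define v where "v = (\<lambda>i. if i < n then a i else 0)"
  have vS: "v \<notin> S"
  proof
    assume "v \<in> S"
    then obtain e where "v = Fn e" unfolding S_def by blast
    then have "\<forall>i<n. mul (a i) e = a i" unfolding v_def Fn_def fun_eq_iff by (metis)
    with ne show False by blast
  qed
  have sub: "F.subspace S"
    unfolding F.subspace_def
  proof (intro conjI ballI allI)
    show "0 \<in> S" unfolding S_def
      by (rule range_eqI[of _ _ 0]) (simp add: Fn_def fun_eq_iff nd_rzero[OF nd])
    fix x y assume "x \<in> S" "y \<in> S"
    then obtain e1 e2 where "x = Fn e1" "y = Fn e2" unfolding S_def by blast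
    then show "x + y \<in> S" unfolding S_def
      by (intro range_eqI[of _ _ "e1 + e2"]) (simp add: Fn_def fun_eq_iff nd_rdist[OF nd])
  next
    fix c x assume "x \<in> S"
    then obtain e where "x = Fn e" unfolding S_def by blast
    then show "scf c x \<in> S" unfolding S_def
      by (intro range_eqI[of _ _ "sc c e"]) (simp add: Fn_def scf_def fun_eq_iff nd_rsc[OF nd] sc0)
  qed
  have spS: "F.span S = S" using sub by (simp add: F.span_eq_iff)
  have "v \<notin> F.span S" unfolding spS by (rule vS)
  from sep[OF vsf this] obtain f where
    lf: "Vector_Spaces.linear scf ((*) :: complex \<Rightarrow> complex \<Rightarrow> complex) f" and fv: "f v \<noteq> 0"
    and fS: "\<forall>x\<in>S. f x = 0" by blast
  have fadd: "\<And>x y. f (x + y) = f x + f y" and fsc: "\<And>c x. f (scf c x) = c * f x"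
    using lf unfolding Vector_Spaces.linear_iff by blast+
  have f0: "f 0 = 0" using fadd[of 0 0] by simp
  define \<omega> where "\<omega> i x = f (\<lambda>j. if j = i then x else 0)" for i x
  have lin: "lin_fun sc (\<omega> i)" for i
    unfolding lin_fun_def Vector_Spaces.linear_iff
  proof (intro conjI allI)
    show "vector_space sc" by (rule vs)
    show "vector_space ((*) :: complex \<Rightarrow> complex \<Rightarrow> complex)" by (rule vs_complex)
    fix x y :: 'a
    have "(\<lambda>j. if j = i then x + y else 0) = (\<lambda>j. if j = i then x else 0) + (\<lambda>j. if j = i then y else 0)"
      by (simp add: fun_eq_iff)
    then show "\<omega> i (x + y) = \<omega> i x + \<omega> i y" unfolding \<omega>_def by (simp add: fadd)
  next
    fix c and x :: 'a
    have "(\<lambda>j. if j = i then sc c x else 0) = scf c (\<lambda>j. if j = i then x else 0)"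
      by (simp add: fun_eq_iff scf_def sc0)
    then show "\<omega> i (sc c x) = c * \<omega> i x" unfolding \<omega>_def by (simp add: fsc)
  qed
  have dec: "\<forall>w. (\<forall>j\<ge>m. w j = 0) \<longrightarrow> f w = (\<Sum>i<m. \<omega> i (w i))" for m
  proof (induction m)
    case 0
    show ?case
    proof (intro allI impI)
      fix w :: "nat \<Rightarrow> 'a" assume "\<forall>j\<ge>0. w j = 0"
      then have "w = 0" by (simp add: fun_eq_iff)
      then show "f w = (\<Sum>i<0. \<omega> i (w i))" by (simp add: f0)
    qed
  next
    case (Suc m)
    show ?case
    proof (intro allI impI)
      fix w :: "nat \<Rightarrow> 'a" assume w: "\<forall>j\<ge>Suc m. w j = 0"
      have eq: "w = w(m := 0) + (\<lambda>j. if j = m then w m else 0)"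
        by (simp add: fun_eq_iff)
      have "\<forall>j\<ge>m. (w(m := 0)) j = 0" using w by (simp add: Suc_le_eq)
      then have "f (w(m := 0)) = (\<Sum>i<m. \<omega> i ((w(m := 0)) i))" using Suc.IH by blast
      also have "\<dots> = (\<Sum>i<m. \<omega> i (w i))" by (rule sum.cong) auto
      finally have "f w = (\<Sum>i<m. \<omega> i (w i)) + \<omega> m (w m)"
        using eq fadd unfolding \<omega>_def by metis
      then show "f w = (\<Sum>i<Suc m. \<omega> i (w i))" by simp
    qed
  qed
  have "(\<Sum>i<n. \<omega> i (a i)) = 0"
  proof (rule H)
    show "\<And>i. i < n \<Longrightarrow> lin_fun sc (\<omega> i)" using lin by blast
    fix e
    have "f (Fn e) = 0" using fS unfolding S_def by blast
    moreover have "f (Fn e) = (\<Sum>i<n. \<omega> i (Fn e i))" using dec[of n] by (simp add: Fn_def)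
    moreover have "(\<Sum>i<n. \<omega> i (Fn e i)) = (\<Sum>i<n. \<omega> i (mul (a i) e))" by (simp add: Fn_def)
    ultimately show "(\<Sum>i<n. \<omega> i (mul (a i) e)) = 0" by simp
  qed
  moreover have "f v = (\<Sum>i<n. \<omega> i (v i))" using dec[of n] by (simp add: v_def)
  moreover have "(\<Sum>i<n. \<omega> i (v i)) = (\<Sum>i<n. \<omega> i (a i))" by (simp add: v_def)
  ultimately show False using fv by simp
qed


lemma rep_ok: "in_tens sc mul m \<Longrightarrow> represents sc mul (rep sc mul m) m"
  unfolding in_tens_def rep_def by (rule someI_ex)

lemma teq_mapl:
  assumes nd: "nd_algebra sc mul" and t: "teq sc X Y"
  shows "teq sc (map (\<lambda>(y, z). (mul x y, z)) X) (map (\<lambda>(y, z). (mul x y, z)) Y)"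
  unfolding teq_def
proof (intro allI impI)
  fix f g assume fg: "lin_fun sc f \<and> lin_fun sc g"
  then have "lin_fun sc (\<lambda>y. f (mul x y))" using lf_compl[OF nd] by blast
  then have "sum_list (map (\<lambda>(y, z). f (mul x y) * g z) X) = sum_list (map (\<lambda>(y, z). f (mul x y) * g z) Y)"
    using t fg unfolding teq_def by blast
  then show "sum_list (map (\<lambda>(y, z). f y * g z) (map (\<lambda>(y, z). (mul x y, z)) X)) =
             sum_list (map (\<lambda>(y, z). f y * g z) (map (\<lambda>(y, z). (mul x y, z)) Y))"
    by (simp add: comp_def split_def)
qed

lemma teq_mapr:
  assumes nd: "nd_algebra sc mul" and t: "teq sc X Y"
  shows "teq sc (map (\<lambda>(y, z). (mul y x, z)) X) (map (\<lambda>(y, z). (mul y x, z)) Y)"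
  using teq_mapl[OF nd_opp[OF nd] t] by simp

lemma H2_right:
  assumes nd: "nd_algebra sc mul" and rc: "regular_comult sc mul \<Delta>"
  shows "teq sc (map (\<lambda>(u, v). (u, mul v q)) (rep sc mul (mmul (tens_one mul x) (\<Delta> b))))
                (map (\<lambda>(y, z). (mul x y, z)) (rep sc mul (mmul (\<Delta> b) (one_tens mul q))))"
proof (rule tens_nd_right[OF nd])
  fix p q'
  let ?t = "rep sc mul (mmul (tens_one mul x) (\<Delta> b))"
  let ?T = "rep sc mul (mmul (\<Delta> b) (one_tens mul q))"
  have r1: "represents sc mul ?t (mmul (tens_one mul x) (\<Delta> b))"
    using rep_ok rc unfolding regular_comult_def by blast
  have r2: "represents sc mul ?T (mmul (\<Delta> b) (one_tens mul q))"
    using rep_ok rc unfolding regular_comult_def by blast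
  have e1: "tmul mul (map (\<lambda>(u, v). (u, mul v q)) ?t) [(p, q')] = tmul mul ?t [(p, mul q q')]"
    by (simp add: tmul_single_r nd_assoc[OF nd] split_def)
  have c1: "teq sc (tmul mul ?t [(p, mul q q')]) (map (\<lambda>(y, z). (mul x y, z)) (fst (\<Delta> b) [(p, mul q q')]))"
    using r1 unfolding represents_def by (auto simp: mmul_def tens_one_def intro: teq_sym)
  have c2': "teq sc (fst (mmul (\<Delta> b) (one_tens mul q)) [(p, q')]) (tmul mul ?T [(p, q')])"
    using r2 unfolding represents_def by blast
  have eq: "fst (mmul (\<Delta> b) (one_tens mul q)) [(p, q')] = fst (\<Delta> b) [(p, mul q q')]"
    by (simp add: mmul_def one_tens_def)
  have c2: "teq sc (fst (\<Delta> b) [(p, mul q q')]) (tmul mul ?T [(p, q')])"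
    using c2' unfolding eq .
  have e2: "tmul mul (map (\<lambda>(y, z). (mul x y, z)) ?T) [(p, q')] = map (\<lambda>(y, z). (mul x y, z)) (tmul mul ?T [(p, q')])"
    by (simp add: tmul_single_r nd_assoc[OF nd] split_def)
  show "teq sc (tmul mul (map (\<lambda>(u, v). (u, mul v q)) ?t) [(p, q')]) (tmul mul (map (\<lambda>(y, z). (mul x y, z)) ?T) [(p, q')])"
    unfolding e1 e2 using teq_trans[OF c1 teq_mapl[OF nd c2]] .
qed

lemma H2_left:
  assumes nd: "nd_algebra sc mul" and rc: "regular_comult sc mul \<Delta>"
  shows "teq sc (map (\<lambda>(u, v). (u, mul q v)) (rep sc mul (mmul (\<Delta> b) (tens_one mul x))))
                (map (\<lambda>(y, z). (mul y x, z)) (rep sc mul (mmul (one_tens mul q) (\<Delta> b))))"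
proof (rule tens_nd_left[OF nd])
  fix p q'
  let ?t = "rep sc mul (mmul (\<Delta> b) (tens_one mul x))"
  let ?T = "rep sc mul (mmul (one_tens mul q) (\<Delta> b))"
  have r1: "represents sc mul ?t (mmul (\<Delta> b) (tens_one mul x))"
    using rep_ok rc unfolding regular_comult_def by blast
  have r2: "represents sc mul ?T (mmul (one_tens mul q) (\<Delta> b))"
    using rep_ok rc unfolding regular_comult_def by blast
  have e1: "tmul mul [(p, q')] (map (\<lambda>(u, v). (u, mul q v)) ?t) = tmul mul [(p, mul q' q)] ?t"
    by (simp add: tmul_single_l nd_assoc[OF nd] split_def)
  have c1: "teq sc (tmul mul [(p, mul q' q)] ?t) (map (\<lambda>(y, z). (mul y x, z)) (snd (\<Delta> b) [(p, mul q' q)]))"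
    using r1 unfolding represents_def by (auto simp: mmul_def tens_one_def intro: teq_sym)
  have c2': "teq sc (snd (mmul (one_tens mul q) (\<Delta> b)) [(p, q')]) (tmul mul [(p, q')] ?T)"
    using r2 unfolding represents_def by blast
  have eq: "snd (mmul (one_tens mul q) (\<Delta> b)) [(p, q')] = snd (\<Delta> b) [(p, mul q' q)]"
    by (simp add: mmul_def one_tens_def)
  have c2: "teq sc (snd (\<Delta> b) [(p, mul q' q)]) (tmul mul [(p, q')] ?T)"
    using c2' unfolding eq .
  have e2: "tmul mul [(p, q')] (map (\<lambda>(y, z). (mul y x, z)) ?T) = map (\<lambda>(y, z). (mul y x, z)) (tmul mul [(p, q')] ?T)"
    by (simp add: tmul_single_l nd_assoc[OF nd] split_def)
  show "teq sc (tmul mul [(p, q')] (map (\<lambda>(u, v). (u, mul q v)) ?t)) (tmul mul [(p, q')] (map (\<lambda>(y, z). (mul y x, z)) ?T))"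
    unfolding e1 e2 using teq_trans[OF c1 teq_mapr[OF nd c2]] .
qed

theorem proposition1p6:
  fixes sc :: "complex \<Rightarrow> 'a::ab_group_add \<Rightarrow> 'a"
    and mul :: "'a \<Rightarrow> 'a \<Rightarrow> 'a"
    and \<Delta> :: "'a \<Rightarrow> 'a mult2"
    and \<phi> :: "'a \<Rightarrow> complex"
    and F :: "'a set"
  assumes "nd_algebra sc mul"
    and "regular_comult sc mul \<Delta>"
    and "left_integral sc mul \<Delta> \<phi>"
    and "finite F"
  shows "\<exists>e. \<forall>a\<in>F. mul a e = a \<and> mul e a = a"
proof -
  note nd = assms(1) and rc = assms(2) and li = assms(3)
  obtain xs where xs: "set xs = F" using finite_list[OF assms(4)] by blast
  define n where "n = length xs"
  define a where "a i = xs ! i" for i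
  have phi: "lin_fun sc \<phi>" using li unfolding left_integral_def by blast
  obtain b where pb: "\<phi> b \<noteq> 0" using li unfolding left_integral_def by blast
  have I1: "\<And>x y. slice2 sc \<phi> (rep sc mul (mmul (\<Delta> x) (tens_one mul y))) = sc (\<phi> x) y"
    using li unfolding left_integral_def by blast
  have I2: "\<And>x y. slice2 sc \<phi> (rep sc mul (mmul (tens_one mul y) (\<Delta> x))) = sc (\<phi> x) y"
    using li unfolding left_integral_def by blast
  have "\<exists>e. \<forall>i<n. mul (a i) e = a i"
  proof (rule tuple_unit[OF nd])
    fix \<omega> :: "nat \<Rightarrow> 'a \<Rightarrow> complex"
    assume H3: "\<And>i. i < n \<Longrightarrow> lin_fun sc (\<omega> i)" and H4: "\<And>e. (\<Sum>i<n. \<omega> i (mul (a i) e)) = 0"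
    show "(\<Sum>i<n. \<omega> i (a i)) = 0"
      by (rule core[OF nd phi pb, of n "\<lambda>i. rep sc mul (mmul (tens_one mul (a i)) (\<Delta> b))" a
            "\<lambda>q. rep sc mul (mmul (\<Delta> b) (one_tens mul q))" \<omega>])
         (simp_all add: I2 H2_right[OF nd rc] H3 H4)
  qed
  then obtain eR where eR: "\<And>i. i < n \<Longrightarrow> mul (a i) eR = a i" by blast
  have "\<exists>e. \<forall>i<n. (\<lambda>x y. mul y x) (a i) e = a i"
  proof (rule tuple_unit[OF nd_opp[OF nd]])
    fix \<omega> :: "nat \<Rightarrow> 'a \<Rightarrow> complex"
    assume H3: "\<And>i. i < n \<Longrightarrow> lin_fun sc (\<omega> i)" and H4: "\<And>e. (\<Sum>i<n. \<omega> i ((\<lambda>x y. mul y x) (a i) e)) = 0"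
    show "(\<Sum>i<n. \<omega> i (a i)) = 0"
      by (rule core[OF nd_opp[OF nd] phi pb, of n "\<lambda>i. rep sc mul (mmul (\<Delta> b) (tens_one mul (a i)))" a
            "\<lambda>q. rep sc mul (mmul (one_tens mul q) (\<Delta> b))" \<omega>])
         (simp_all add: I1 H2_left[OF nd rc] H3 H4)
  qed
  then obtain eL where eL: "\<And>i. i < n \<Longrightarrow> mul eL (a i) = a i" by auto
  show ?thesis
  proof (intro exI[of _ "eL + eR - mul eR eL"] ballI)
    fix x assume "x \<in> F"
    then obtain i where i: "i < n" "x = a i" using xs by (auto simp: in_set_conv_nth n_def a_def)
    have "mul x (eL + eR - mul eR eL) = mul x eL + mul x eR - mul (mul x eR) eL"
      by (simp add: nd_rdist[OF nd] nd_rminus[OF nd] nd_assoc[OF nd])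
    also have "\<dots> = x" using eR[OF i(1)] i(2) by simp
    finally have 1: "mul x (eL + eR - mul eR eL) = x" .
    have "mul (eL + eR - mul eR eL) x = mul eL x + mul eR x - mul eR (mul eL x)"
      by (simp add: nd_ldist[OF nd] nd_lminus[OF nd] nd_assoc[OF nd])
    also have "\<dots> = x" using eL[OF i(1)] i(2) by simp
    finally show "mul x (eL + eR - mul eR eL) = x \<and> mul (eL + eR - mul eR eL) x = x" using 1 by simp
  qed
qed

end
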